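(* Let $U\subset\mathbb{C}$ be a simply connected domain and $\Phi\in\Sigma(U)$ a piecewise analytic function with data $(M_i,A_i)_{i=1}^r$ where $A_1\equiv0$. Let $p\in U$ satisfy: (i) $p\in\overline{M_i}$ for all $i$; (ii) $A_i(p)-A_k(p)\notin\mathbb{R}(A_j(p)-A_k(p))$ for every triple of distinct indices $(i,j,k)$; (iii) $A_i(p)\ne A_k(p)$ for all distinct $i,k$. Let $H_i(z)=\Re\int_p^zA_i(w)\,dw$ (so $H_1\equiv0$), $\varphi=\max_iH_i$, $W=\{z\in U:\varphi(z)=0\}$ with interior $\mathring W$, and for $z\in U$ let $V(z)$ be the set of $\zeta\in U$ for which there exists a piecewise $C^1$ path from $z$ to $\zeta$ along which all $H_i$ are decreasing. Then there is a neighborhood $N$ of $p$ such that $\lim_{U\ni z\to p}V(z)=N\cap\mathring W$, i.e. for every $\alpha\in N\cap\mathring W$ and every sequence $(z_n)\subset U$ converging to $p$, one has $\alpha\in V(z_n)$ for all but finitely many $n$.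
   Context: $\Phi\in L^1_{loc}(U)$ is piecewise analytic with data $(M_i,A_i)_{i=1}^r$ if $M_1,\dots,M_r$ are pairwise disjoint open subsets of $U$ with $U\setminus\bigcup_iM_i$ of Lebesgue measure zero, $A_1,\dots,A_r$ are pairwise distinct analytic functions on $U$, and $\Phi=\sum_iA_i\chi_{M_i}$ a.e. $\Sigma(U)$ is the set of distributions $f$ on $U$ with $\partial f/\partial\bar z\ge0$ (a positive measure). *)

theory Defs
  imports "HOL-Complex_Analysis.Complex_Analysis"
begin

definition dx :: "(complex \<Rightarrow> real) \<Rightarrow> complex \<Rightarrow> real" where
  "dx f z = deriv (\<lambda>t::real. f (z + of_real t)) 0"

definition dy :: "(complex \<Rightarrow> real) \<Rightarrow> complex \<Rightarrow> real" where
  "dy f z = deriv (\<lambda>t::real. f (z + \<i> * of_real t)) 0"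

fun pd :: "bool list \<Rightarrow> (complex \<Rightarrow> real) \<Rightarrow> complex \<Rightarrow> real" where
  "pd [] f = f"
| "pd (b # bs) f = (if b then dx else dy) (pd bs f)"

definition smooth_fun :: "(complex \<Rightarrow> real) \<Rightarrow> bool" where
  "smooth_fun f \<longleftrightarrow> (\<forall>ws. pd ws f differentiable_on UNIV)"

definition test_function :: "complex set \<Rightarrow> (complex \<Rightarrow> real) \<Rightarrow> bool" where
  "test_function U f \<longleftrightarrow> smooth_fun f \<and> compact (closure {z. f z \<noteq> 0})
      \<and> closure {z. f z \<noteq> 0} \<subseteq> U"

definition dbar :: "(complex \<Rightarrow> real) \<Rightarrow> complex \<Rightarrow> complex" where
  "dbar f z = (of_real (dx f z) + \<i> * of_real (dy f z)) / 2"

definition locally_integrable_on :: "(complex \<Rightarrow> complex) \<Rightarrow> complex set \<Rightarrow> bool" where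
  "locally_integrable_on \<Phi> U \<longleftrightarrow> (\<forall>K. compact K \<and> K \<subseteq> U \<longrightarrow> set_integrable lborel K \<Phi>)"

text \<open>Sigma(U): locally integrable f with d f / d zbar a positive measure, i.e.
  <df/dzbar, phi> = - int f * dphi/dzbar is real and >= 0 for every test function phi >= 0.\<close>
definition Sigma_class :: "complex set \<Rightarrow> (complex \<Rightarrow> complex) \<Rightarrow> bool" where
  "Sigma_class U \<Phi> \<longleftrightarrow> locally_integrable_on \<Phi> U \<and>
     (\<forall>\<phi>. test_function U \<phi> \<and> (\<forall>z. \<phi> z \<ge> 0) \<longrightarrow>
        (let I = - (LINT z:U|lborel. \<Phi> z * dbar \<phi> z) in Im I = 0 \<and> Re I \<ge> 0))"

definition piecewise_analytic ::
  "complex set \<Rightarrow> (complex \<Rightarrow> complex) \<Rightarrow> nat \<Rightarrow> (nat \<Rightarrow> complex set) \<Rightarrow> (nat \<Rightarrow> complex \<Rightarrow> complex) \<Rightarrow> bool" where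
  "piecewise_analytic U \<Phi> r M A \<longleftrightarrow>
     (\<forall>i\<in>{1..r}. open (M i) \<and> M i \<subseteq> U) \<and>
     (\<forall>i\<in>{1..r}. \<forall>j\<in>{1..r}. i \<noteq> j \<longrightarrow> M i \<inter> M j = {}) \<and>
     (U - (\<Union>i\<in>{1..r}. M i)) \<in> null_sets lebesgue \<and>
     (\<forall>i\<in>{1..r}. A i analytic_on U) \<and>
     (\<forall>i\<in>{1..r}. \<forall>j\<in>{1..r}. i \<noteq> j \<longrightarrow> (\<exists>z\<in>U. A i z \<noteq> A j z)) \<and>
     (AE z in lebesgue. z \<in> U \<longrightarrow> \<Phi> z = (\<Sum>i\<in>{1..r}. if z \<in> M i then A i z else 0))"

text \<open>H(z) = Re int_p^z A(w) dw along a piecewise C1 path in U (path independent when U is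
  simply connected and A analytic).\<close>
definition Hfun :: "complex set \<Rightarrow> complex \<Rightarrow> (complex \<Rightarrow> complex) \<Rightarrow> complex \<Rightarrow> real" where
  "Hfun U p F z = Re (contour_integral
      (SOME g. valid_path g \<and> path_image g \<subseteq> U \<and> pathstart g = p \<and> pathfinish g = z) F)"

definition Vset :: "complex set \<Rightarrow> nat \<Rightarrow> (nat \<Rightarrow> complex \<Rightarrow> real) \<Rightarrow> complex \<Rightarrow> complex set" where
  "Vset U r H z = {\<zeta> \<in> U. \<exists>g. valid_path g \<and> path_image g \<subseteq> U \<and> pathstart g = z \<and> pathfinish g = \<zeta> \<and>
      (\<forall>i\<in>{1..r}. \<forall>s t. 0 \<le> s \<and> s \<le> t \<and> t \<le> 1 \<longrightarrow> H i (g t) \<le> H i (g s))}"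

end

theory Submission
  imports Defs
begin

lemma valid_path_exists:
  fixes U :: "complex set"
  assumes "open U" "connected U" "x \<in> U" "y \<in> U"
  shows "\<exists>g. valid_path g \<and> path_image g \<subseteq> U \<and> pathstart g = x \<and> pathfinish g = y"
  using connected_open_polynomial_connected[OF assms] valid_path_polynomial_function by blast

lemma Hfun_eq:
  assumes "open U" "connected U" "p \<in> U" "w \<in> U"
    and "\<And>x. x \<in> U \<Longrightarrow> (Fp has_field_derivative f x) (at x)"
  shows "Hfun U p f w = Re (Fp w - Fp p)"
proof -
  let ?P = "\<lambda>g. valid_path g \<and> path_image g \<subseteq> U \<and> pathstart g = p \<and> pathfinish g = w"
  have ex: "\<exists>g. ?P g" by (rule valid_path_exists[OF assms(1-4)])
  define g where "g = (SOME g. ?P g)"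
  have P: "?P g" unfolding g_def by (rule someI_ex[OF ex])
  have "(f has_contour_integral (Fp (pathfinish g) - Fp (pathstart g))) g"
  proof (rule contour_integral_primitive[where S=U])
    fix x assume "x \<in> U"
    then show "(Fp has_field_derivative f x) (at x within U)"
      using assms(5) has_field_derivative_at_within by blast
  qed (use P in auto)
  then have "contour_integral g f = Fp w - Fp p" using P contour_integral_unique by auto
  then show ?thesis unfolding Hfun_def g_def by simp
qed

lemma antitone_join:
  assumes "pathfinish g1 = pathstart g2"
   and "\<forall>s t. 0 \<le> s \<and> s \<le> t \<and> t \<le> 1 \<longrightarrow> h (g1 t) \<le> (h (g1 s) :: real)"
   and "\<forall>s t. 0 \<le> s \<and> s \<le> t \<and> t \<le> 1 \<longrightarrow> h (g2 t) \<le> h (g2 s)"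
  shows "\<forall>s t. 0 \<le> s \<and> s \<le> t \<and> t \<le> 1 \<longrightarrow> h ((g1 +++ g2) t) \<le> h ((g1 +++ g2) s)"
proof (intro allI impI)
  fix s t :: real assume st: "0 \<le> s \<and> s \<le> t \<and> t \<le> 1"
  have e: "g2 0 = g1 1" using assms(1) by (simp add: pathfinish_def pathstart_def)
  show "h ((g1 +++ g2) t) \<le> h ((g1 +++ g2) s)"
  proof (cases "t \<le> 1/2")
    case True
    then show ?thesis using st assms(2) by (simp add: joinpaths_def)
  next
    case False
    show ?thesis
    proof (cases "s \<le> 1/2")
      case True
      have a1: "h (g2 (2*t-1)) \<le> h (g2 0)" using assms(3) st False by auto
      have a2: "h (g1 1) \<le> h (g1 (2 * s))" using assms(2) st True by auto
      show ?thesis using True False a1 a2 e by (simp add: joinpaths_def)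
    next
      case f2: False
      then show ?thesis using st False assms(3) by (simp add: joinpaths_def)
    qed
  qed
qed

lemma antitone_deriv01:
  fixes f :: "real \<Rightarrow> real"
  assumes "\<And>t. 0 \<le> t \<Longrightarrow> t \<le> 1 \<Longrightarrow> (f has_real_derivative f' t) (at t)"
    "\<And>t. 0 \<le> t \<Longrightarrow> t \<le> 1 \<Longrightarrow> f' t \<le> 0"
  shows "\<forall>s t. 0 \<le> s \<and> s \<le> t \<and> t \<le> 1 \<longrightarrow> f t \<le> f s"
proof (intro allI impI)
  fix s t :: real assume st: "0 \<le> s \<and> s \<le> t \<and> t \<le> 1"
  show "f t \<le> f s"
  proof (rule DERIV_nonpos_imp_nonincreasing[of s t f])
    show "s \<le> t" using st by simp
    fix x assume "s \<le> x" "x \<le> t"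
    then have "0 \<le> x" "x \<le> 1" using st by auto
    then show "\<exists>y. (f has_real_derivative y) (at x) \<and> y \<le> 0" using assms(1)[of x] assms(2)[of x] by auto
  qed
qed

lemma chart_line_deriv:
  assumes "(G has_field_derivative G') (at (u0 + of_real t * v))"
    "(F has_field_derivative A) (at (G (u0 + of_real t * v)))"
  shows "((\<lambda>t. Re (F (G (u0 + of_real t * v)))) has_real_derivative Re (A * G' * v)) (at t)"
proof -
  have l: "((\<lambda>t::real. u0 + of_real t * v) has_vector_derivative v) (at t)"
    unfolding has_vector_derivative_def
    by (rule has_derivative_eq_rhs, (rule derivative_intros)+, auto simp: scaleR_conv_of_real)
  have c: "((\<lambda>x. F (G x)) has_field_derivative (A * G')) (at (u0 + of_real t * v))"
    by (rule DERIV_chain2[OF assms(2) assms(1)])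
  have "(((\<lambda>x. F (G x)) \<circ> (\<lambda>t::real. u0 + of_real t * v)) has_vector_derivative (v * (A * G'))) (at t)"
    by (rule field_vector_diff_chain_at[OF l]) (use c in simp)
  from has_field_derivative_Re[OF this]
  show ?thesis by (simp add: o_def mult_ac)
qed


lemma antitone_deriv:
  fixes f :: "real \<Rightarrow> real"
  assumes "\<And>t. a \<le> t \<Longrightarrow> t \<le> b \<Longrightarrow> (f has_real_derivative f' t) (at t)"
    "\<And>t. a \<le> t \<Longrightarrow> t \<le> b \<Longrightarrow> f' t \<le> 0"
    "a \<le> s" "s \<le> t" "t \<le> b"
  shows "f t \<le> f s"
proof (rule DERIV_nonpos_imp_nonincreasing[of s t f])
  show "s \<le> t" using assms by simp
  fix x assume "s \<le> x" "x \<le> t"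
  then have "a \<le> x" "x \<le> b" using assms by auto
  then show "\<exists>y. (f has_real_derivative y) (at x) \<and> y \<le> 0" using assms(1)[of x] assms(2)[of x] by auto
qed

lemma linepath_alt: "linepath a b t = a + of_real t * (b - (a::complex))"
  by (simp add: linepath_def scaleR_conv_of_real algebra_simps)

lemma chart:
  fixes f :: "complex \<Rightarrow> complex"
  assumes "open S" "inj_on f S" "\<And>w. w \<in> S \<Longrightarrow> (f has_field_derivative a w) (at w)"
    "\<And>w. w \<in> S \<Longrightarrow> a w \<noteq> 0"
  obtains g where "g holomorphic_on f ` S" "open (f ` S)" "\<And>w. w \<in> S \<Longrightarrow> g (f w) = w"
    "\<And>u. u \<in> f ` S \<Longrightarrow> f (g u) = u" "\<And>u. u \<in> f ` S \<Longrightarrow> g u \<in> S"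
    "\<And>u. u \<in> f ` S \<Longrightarrow> (g has_field_derivative (1 / a (g u))) (at u)"
proof -
  have hol: "f holomorphic_on S"
    using assms(3) by (meson assms(1) field_differentiable_def holomorphic_on_open)
  obtain g where g: "g holomorphic_on f ` S" "\<And>z. z \<in> S \<Longrightarrow> deriv f z * deriv g (f z) = 1"
    "\<And>z. z \<in> S \<Longrightarrow> g (f z) = z"
    using holomorphic_has_inverse[OF hol assms(1,2)] by metis
  have op: "open (f ` S)" by (rule open_mapping_thm3[OF hol assms(1,2)])
  show ?thesis
  proof (rule that[OF g(1) op g(3)])
    fix u assume "u \<in> f ` S"
    then obtain z where z: "z \<in> S" "u = f z" by auto
    show "f (g u) = u" using z g(3) by simp
    show "g u \<in> S" using z g(3) by simp
    have df: "deriv f z = a z" using assms(3)[OF z(1)] by (rule DERIV_imp_deriv)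
    have "(g has_field_derivative deriv g u) (at u)"
      using g(1) op \<open>u \<in> f ` S\<close> holomorphic_derivI by blast
    moreover have "deriv g u = 1 / a (g u)"
      using g(2)[OF z(1)] df z g(3) assms(4)[OF z(1)] by (simp add: field_simps)
    ultimately show "(g has_field_derivative (1 / a (g u))) (at u)" by simp
  qed
qed

lemma interior_strict:
  fixes f g :: "complex \<Rightarrow> complex"
  assumes "open (f ` S)" "continuous_on (f ` S) g" "\<And>u. u \<in> f ` S \<Longrightarrow> f (g u) = u" "\<alpha> \<in> S"
    "\<And>w. w \<in> S \<Longrightarrow> g (f w) = w" "e > 0" "\<And>w. w \<in> ball \<alpha> e \<Longrightarrow> Re (f w) \<le> 0"
  shows "Re (f \<alpha>) < 0"
proof -
  define u0 where "u0 = f \<alpha>"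
  have u0S: "u0 \<in> f ` S" using assms(4) u0_def by simp
  have ga: "g u0 = \<alpha>" using assms(5)[OF assms(4)] u0_def by simp
  have "isCont g u0" using assms(1,2) u0S continuous_on_eq_continuous_at by blast
  then obtain \<delta> where \<delta>: "\<delta> > 0" "\<And>u. dist u u0 < \<delta> \<Longrightarrow> dist (g u) (g u0) < e"
    using assms(6) continuous_at_eps_delta by metis
  obtain \<epsilon> where \<epsilon>: "\<epsilon> > 0" "ball u0 \<epsilon> \<subseteq> f ` S" using assms(1) u0S openE by metis
  define \<delta>1 where "\<delta>1 = min \<delta> \<epsilon> / 2"
  have d1: "\<delta>1 > 0" "\<delta>1 < \<delta>" "\<delta>1 < \<epsilon>" using \<delta> \<epsilon> by (auto simp: \<delta>1_def)
  define u where "u = u0 + of_real \<delta>1"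
  have du: "dist u u0 = \<delta>1" using d1 by (simp add: u_def dist_norm)
  have uS: "u \<in> f ` S" using \<epsilon> du d1 by (auto simp: dist_commute)
  have "g u \<in> ball \<alpha> e" using \<delta>(2)[of u] du d1 ga by (simp add: dist_commute)
  then have "Re (f (g u)) \<le> 0" by (rule assms(7))
  then have "Re u0 + \<delta>1 \<le> 0" using assms(3)[OF uS] by (simp add: u_def)
  then show ?thesis using d1 u0_def by simp
qed

lemma extreme_aux: "y1 * X2 - X1 * y2 = X1 * X2 * (y2 / (- X2) - y1 / (- X1))"
  if "X1 \<noteq> 0" "X2 \<noteq> 0" for X1 X2 y1 y2 :: real
  using that by (simp add: field_simps)

lemma extreme:
  fixes a :: "nat \<Rightarrow> complex"
  assumes "finite I" "I \<noteq> {}" "\<And>i. i \<in> I \<Longrightarrow> Re (a i * d) < 0"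
    "\<And>i j. i \<in> I \<Longrightarrow> j \<in> I \<Longrightarrow> i \<noteq> j \<Longrightarrow> Im (a i * cnj (a j)) \<noteq> 0"
  shows "\<exists>k\<in>I. \<forall>i\<in>I-{k}. Im (a i * cnj (a k)) > 0"
proof -
  define t where "t i = Im (a i * d) / (- Re (a i * d))" for i
  have "Max (t ` I) \<in> t ` I" using Max_in[of "t`I"] assms(1,2) by auto
  then obtain k where k: "k \<in> I" "t k = Max (t ` I)" by (metis imageE)
  show ?thesis
  proof (intro bexI[OF _ k(1)] ballI)
    fix i assume i: "i \<in> I - {k}"
    have le: "t i \<le> t k" using k assms(1) i by auto
    have xi: "Re (a i * d) < 0" and xk: "Re (a k * d) < 0" using assms(3) i k by auto
    have key: "Im (a i * cnj (a k)) * (cmod d)^2 = Re (a i * d) * Re (a k * d) * (t k - t i)"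
    proof -
      have h1: "a i * cnj (a k) * of_real ((cmod d)^2) = (a i * d) * cnj (a k * d)"
      proof -
        have dd: "complex_of_real (cmod d) ^ 2 = d * cnj d" using complex_norm_square[of d] by simp
        show ?thesis by (simp add: dd mult_ac)
      qed
      have h2: "Im (a i * cnj (a k)) * (cmod d)^2 = Im ((a i * d) * cnj (a k * d))"
        using arg_cong[OF h1, of Im] by simp
      have h3: "Im ((a i * d) * cnj (a k * d)) = Im (a i * d) * Re (a k * d) - Re (a i * d) * Im (a k * d)"
        by (simp add: algebra_simps)
      show ?thesis unfolding h2 h3 t_def using xi xk by (intro extreme_aux) auto
    qed
    have "Re (a i * d) * Re (a k * d) * (t k - t i) \<ge> 0"
      using xi xk le by (simp add: mult_pos_pos zero_le_mult_iff mult_neg_neg)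
    then have "Im (a i * cnj (a k)) * (cmod d)^2 \<ge> 0" using key by simp
    moreover have "d \<noteq> 0" using xi by auto
    ultimately have "Im (a i * cnj (a k)) \<ge> 0" by (simp add: zero_le_mult_iff)
    then show "Im (a i * cnj (a k)) > 0" using assms(4)[of i k] i k by force
  qed
qed

lemma im_cnj_scale: "Im (x * cnj y) * (cmod d)^2 = Im (x*d) * Re (y*d) - Re (x*d) * Im (y*d)"
proof -
  have dd: "complex_of_real (cmod d) ^ 2 = d * cnj d" using complex_norm_square[of d] by simp
  have h1: "x * cnj y * of_real ((cmod d)^2) = (x * d) * cnj (y * d)"
    by (simp add: dd mult_ac)
  have "Im (x * cnj y) * (cmod d)^2 = Im ((x * d) * cnj (y * d))"
    using arg_cong[OF h1, of Im] by simp
  also have "\<dots> = Im (x*d) * Re (y*d) - Re (x*d) * Im (y*d)" by (simp add: algebra_simps)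
  finally show ?thesis .
qed

lemma near_point:
  fixes p :: complex
  assumes "\<forall>\<^sub>F w in at p. P w" "P p"
  shows "\<exists>\<rho>>0. \<forall>w\<in>ball p \<rho>. P w"
proof -
  obtain d where "d > 0" "\<And>x. x \<noteq> p \<Longrightarrow> dist x p < d \<Longrightarrow> P x"
    using assms(1) unfolding eventually_at by auto
  then show ?thesis using assms(2) by (intro exI[of _ d]) (metis dist_commute mem_ball)
qed

locale ctx4 =
  fixes U :: "complex set" and F A :: "nat \<Rightarrow> complex \<Rightarrow> complex" and p :: complex and r :: nat
  assumes opn: "open U" and conn: "connected U" and pU: "p \<in> U" and r1: "1 \<le> r"
    and derF: "\<And>i w. i \<in> {1..r} \<Longrightarrow> w \<in> U \<Longrightarrow> (F i has_field_derivative A i w) (at w)"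
    and F0: "\<And>i. i \<in> {1..r} \<Longrightarrow> F i p = 0"
    and F1: "\<And>w. w \<in> U \<Longrightarrow> F 1 w = 0"
    and A1: "\<And>w. w \<in> U \<Longrightarrow> A 1 w = 0"
    and contA: "\<And>i. i \<in> {1..r} \<Longrightarrow> continuous_on U (A i)"
    and par: "\<And>i j. i \<in> {2..r} \<Longrightarrow> j \<in> {2..r} \<Longrightarrow> i \<noteq> j \<Longrightarrow> Im (A i p * cnj (A j p)) \<noteq> 0"
    and nz: "\<And>i. i \<in> {2..r} \<Longrightarrow> A i p \<noteq> 0"
begin

definition "Wc = {z \<in> U. \<forall>i\<in>{1..r}. Re (F i z) \<le> 0}"

definition "good z \<alpha> \<longleftrightarrow> (\<exists>g. valid_path g \<and> path_image g \<subseteq> U \<and> pathstart g = z \<and> pathfinish g = \<alpha> \<and>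
   (\<forall>i\<in>{1..r}. \<forall>s t. 0 \<le> s \<and> s \<le> t \<and> t \<le> 1 \<longrightarrow> Re (F i (g t)) \<le> Re (F i (g s))))"

definition "concl N \<longleftrightarrow> open N \<and> p \<in> N \<and> (\<forall>\<alpha> \<in> N \<inter> interior Wc. \<forall>z::nat\<Rightarrow>complex.
   (\<forall>n. z n \<in> U) \<and> z \<longlonglongrightarrow> p \<longrightarrow> (\<forall>\<^sub>F n in sequentially. good (z n) \<alpha>))"

lemma int_ball: "\<alpha> \<in> interior Wc \<Longrightarrow> \<exists>e>0. ball \<alpha> e \<subseteq> Wc"
  using interior_subset open_contains_ball_eq open_interior by (metis subset_trans)

lemma Wc_U: "Wc \<subseteq> U" by (auto simp: Wc_def)

lemma contA_at: "i \<in> {1..r} \<Longrightarrow> w \<in> U \<Longrightarrow> isCont (A i) w"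
  using contA opn continuous_on_eq_continuous_at by blast

lemma contF_at: "i \<in> {1..r} \<Longrightarrow> w \<in> U \<Longrightarrow> isCont (F i) w"
  using derF DERIV_isCont by blast

lemma case_r1:
  assumes "r = 1" shows "\<exists>N. concl N"
proof -
  have "concl U"
    unfolding concl_def
  proof (intro conjI ballI allI impI)
    fix \<alpha> z assume \<alpha>: "\<alpha> \<in> U \<inter> interior Wc" and z: "(\<forall>n. z n \<in> U) \<and> z \<longlonglongrightarrow> p"
    have "good (z n) \<alpha>" for n
    proof -
      obtain g where g: "valid_path g" "path_image g \<subseteq> U" "pathstart g = z n" "pathfinish g = \<alpha>"
        using valid_path_exists[OF opn conn, of "z n" \<alpha>] z \<alpha> by auto
      have "Re (F i (g t)) \<le> Re (F i (g s))" if "i \<in> {1..r}" "0 \<le> s" "s \<le> t" "t \<le> 1" for i s t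
      proof -
        have "g t \<in> U" "g s \<in> U" using g(2) that by (auto simp: path_image_def)
        then show ?thesis using that assms F1 by auto
      qed
      then show ?thesis unfolding good_def using g by blast
    qed
    then show "\<forall>\<^sub>F n in sequentially. good (z n) \<alpha>" by simp
  qed (use opn pU in auto)
  then show ?thesis by blast
qed

end

lemma Re_ofreal_mult: "Re (complex_of_real x * z) = x * Re z" by simp

context ctx4 begin

lemma caseA_pos:
  assumes r2: "2 \<le> r" and noB: "\<not> (\<exists>d. \<forall>i\<in>{2..r}. Re (A i p * d) < 0)"
    and d: "d \<noteq> 0"
  shows "\<exists>i\<in>{2..r}. Re (A i p * d) > 0"
proof (rule ccontr)
  assume "\<not> ?thesis"
  then have le: "\<forall>i\<in>{2..r}. Re (A i p * d) \<le> 0" by (auto simp: not_less)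
  from noB have "\<not> (\<forall>i\<in>{2..r}. Re (A i p * d) < 0)" by blast
  then obtain j where j: "j \<in> {2..r}" "Re (A j p * d) = 0" using le by force
  have lt: "Re (A i p * d) < 0" if i: "i \<in> {2..r}" "i \<noteq> j" for i
  proof (rule ccontr)
    assume "\<not> Re (A i p * d) < 0"
    then have "Re (A i p * d) = 0" using le i by force
    then have "Im (A i p * cnj (A j p)) * (cmod d)^2 = 0" using j(2) im_cnj_scale by simp
    then show False using par[OF i(1) j(1) i(2)] d by simp
  qed
  let ?d = "\<lambda>\<epsilon>::real. d - of_real \<epsilon> * cnj (A j p)"
  have ev: "\<forall>\<^sub>F \<epsilon> in at_right 0. \<forall>i\<in>{2..r}. Re (A i p * ?d \<epsilon>) < 0"
  proof (rule eventually_ball_finite, simp, intro ballI)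
    fix i assume i: "i \<in> {2..r}"
    show "\<forall>\<^sub>F \<epsilon> in at_right 0. Re (A i p * ?d \<epsilon>) < 0"
    proof (cases "i = j")
      case True
      have pos: "Re (A j p * cnj (A j p)) > 0" using nz[OF j(1)]
        by (simp add: complex_mult_cnj complex_neq_0)
      show ?thesis using eventually_at_right_less[of "0::real"]
      proof (rule eventually_mono)
        fix \<epsilon> :: real assume "0 < \<epsilon>"
        then have "Re (A j p * ?d \<epsilon>) = - \<epsilon> * Re (A j p * cnj (A j p))"
          using j(2) by (simp add: algebra_simps)
        then show "Re (A i p * ?d \<epsilon>) < 0" using True pos \<open>0 < \<epsilon>\<close> by (simp add: mult_pos_pos)
      qed
    next
      case False
      have "((\<lambda>\<epsilon>. Re (A i p * ?d \<epsilon>)) \<longlongrightarrow> Re (A i p * ?d 0)) (at_right 0)"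
        by (intro tendsto_intros)
      then have "((\<lambda>\<epsilon>. Re (A i p * ?d \<epsilon>)) \<longlongrightarrow> Re (A i p * d)) (at_right 0)" by simp
      from order_tendstoD(2)[OF this lt[OF i False]] show ?thesis .
    qed
  qed
  then obtain \<epsilon> where "\<forall>i\<in>{2..r}. Re (A i p * ?d \<epsilon>) < 0"
    using eventually_happens trivial_limit_at_right_real by blast
  then show False using noB by blast
qed

lemma caseA:
  assumes r2: "2 \<le> r" and noB: "\<not> (\<exists>d. \<forall>i\<in>{2..r}. Re (A i p * d) < 0)"
  shows "\<exists>N. concl N"
proof -
  define I where "I = {2..r}"
  have I: "finite I" "I \<noteq> {}" using r2 by (auto simp: I_def)
  define g where "g d = (\<Sum>i\<in>I. max 0 (Re (A i p * d)))" for d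
  have "continuous_on (sphere 0 1) g" unfolding g_def by (intro continuous_intros)
  then obtain dm where dm: "dm \<in> sphere 0 1" "\<And>y. y \<in> sphere 0 1 \<Longrightarrow> g dm \<le> g y"
    using continuous_attains_inf[OF compact_sphere, of 0 1 g] by fastforce
  define m where "m = g dm"
  have "m > 0"
  proof -
    have "dm \<noteq> 0" using dm(1) by auto
    then obtain i where i: "i \<in> I" "Re (A i p * dm) > 0" using caseA_pos[OF r2 noB] I_def by blast
    have "max 0 (Re (A i p * dm)) \<le> g dm" unfolding g_def
      by (rule member_le_sum) (use i I in auto)
    then show ?thesis using i m_def by simp
  qed
  define c where "c = m / real (card I)"
  have cpos: "c > 0" using \<open>m > 0\<close> I by (simp add: c_def card_gt_0_iff)
  have big: "\<exists>i\<in>I. Re (A i p * d) \<ge> c" if "d \<in> sphere 0 1" for d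
  proof (rule ccontr)
    assume "\<not> ?thesis"
    then have "\<forall>i\<in>I. max 0 (Re (A i p * d)) < c" using cpos by auto
    then have "g d < (\<Sum>i\<in>I. c)" unfolding g_def using I by (intro sum_strict_mono) auto
    also have "\<dots> = m" using I by (simp add: c_def card_gt_0_iff)
    finally show False using dm(2)[OF that] m_def by simp
  qed
  have "\<forall>\<^sub>F w in at p. \<forall>i\<in>I. dist (A i w) (A i p) < c/2"
  proof (rule eventually_ball_finite[OF I(1)], intro ballI)
    fix i assume "i \<in> I"
    then have "isCont (A i) p" using contA_at pU I_def by auto
    then have "(A i \<longlongrightarrow> A i p) (at p)" unfolding isCont_def .
    from tendstoD[OF this, of "c/2"] cpos show "\<forall>\<^sub>F w in at p. dist (A i w) (A i p) < c/2" by simp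
  qed
  moreover have "\<forall>\<^sub>F w in at p. w \<in> U"
    using opn pU eventually_at_topological by blast
  ultimately have "\<forall>\<^sub>F w in at p. w \<in> U \<and> (\<forall>i\<in>I. dist (A i w) (A i p) < c/2)"
    by (rule eventually_conj[rotated])
  then obtain \<rho> where \<rho>: "\<rho> > 0" "\<And>w. w \<in> ball p \<rho> \<Longrightarrow> w \<in> U \<and> (\<forall>i\<in>I. dist (A i w) (A i p) < c/2)"
    using near_point[where p=p and P="\<lambda>w. w \<in> U \<and> (\<forall>i\<in>I. dist (A i w) (A i p) < c/2)"] pU cpos by auto
  have pos: "\<exists>i\<in>{1..r}. Re (F i z) > 0" if z: "z \<in> ball p \<rho>" "z \<noteq> p" for z
  proof -
    define d where "d = (z - p) / of_real (cmod (z - p))"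
    have nz0: "cmod (z - p) > 0" using z by simp
    have zd: "z - p = of_real (cmod (z - p)) * d" using nz0 by (simp add: d_def)
    have "d \<in> sphere 0 1" using nz0 by (simp add: d_def norm_divide)
    then obtain i where i: "i \<in> I" "Re (A i p * d) \<ge> c" using big by blast
    have iU: "i \<in> {1..r}" using i I_def by auto
    define h where "h w = F i w - A i p * (w - p)" for w
    have "norm (h z - h p) \<le> c/2 * norm (z - p)"
    proof (rule field_differentiable_bound[where S="ball p \<rho>" and f'="\<lambda>w. A i w - A i p"])
      fix w assume w: "w \<in> ball p \<rho>"
      then have "w \<in> U" using \<rho> by blast
      show "(h has_field_derivative A i w - A i p) (at w within ball p \<rho>)"
        unfolding h_def using has_field_derivative_at_within[OF derF[OF iU \<open>w \<in> U\<close>]]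
        by (auto intro!: derivative_eq_intros)
      show "norm (A i w - A i p) \<le> c/2" using \<rho>(2)[OF w] i by (auto simp: dist_norm less_imp_le)
    qed (use z \<rho> in auto)
    then have hz: "norm (h z) \<le> c/2 * cmod (z - p)" using F0[OF iU] by (simp add: h_def)
    have e1: "A i p * (z - p) = of_real (cmod (z - p)) * (A i p * d)"
      using zd by (metis mult.left_commute)
    have "Re (A i p * (z - p)) = cmod (z - p) * Re (A i p * d)"
      unfolding e1 by (rule Re_ofreal_mult)
    also have "\<dots> \<ge> cmod (z - p) * c" using i nz0 by (simp add: mult_left_mono)
    finally have a: "Re (A i p * (z - p)) \<ge> cmod (z - p) * c" .
    have "Re (F i z) = Re (A i p * (z - p)) + Re (h z)" by (simp add: h_def)
    moreover have "Re (h z) \<ge> - (c/2 * cmod (z - p))"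
      using hz abs_Re_le_cmod[of "h z"] by linarith
    ultimately have "Re (F i z) \<ge> c/2 * cmod (z - p)" using a by (simp add: algebra_simps)
    moreover have "c/2 * cmod (z - p) > 0" using cpos nz0 by simp
    ultimately show ?thesis using iU by force
  qed
  have "concl (ball p \<rho>)"
    unfolding concl_def
  proof (intro conjI ballI allI impI)
    fix \<alpha> zz assume \<alpha>: "\<alpha> \<in> ball p \<rho> \<inter> interior Wc"
    then obtain e where e: "e > 0" "ball \<alpha> e \<subseteq> Wc" using int_ball by blast
    obtain z where z: "z \<in> ball \<alpha> e" "z \<in> ball p \<rho>" "z \<noteq> p"
    proof (cases "\<alpha> = p")
      case True
      define z where "z = p + of_real (min e \<rho> / 2)"
      show ?thesis
        by (rule that[of z]) (use True e \<rho> in \<open>auto simp: z_def dist_norm\<close>)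
    next
      case False
      then show ?thesis using that[of \<alpha>] \<alpha> e by auto
    qed
    then have "z \<in> Wc" using e by blast
    then show "\<forall>\<^sub>F n in sequentially. good (zz n) \<alpha>" using pos[OF z(2,3)] by (force simp: Wc_def)
  qed (use \<rho> in auto)
  then show ?thesis by blast
qed

end

lemma chart_path:
  fixes G :: "complex \<Rightarrow> complex"
  assumes "G holomorphic_on Tset" "open Tset" "closed_segment a b \<subseteq> Tset"
  shows "valid_path (G \<circ> linepath a b)" "path_image (G \<circ> linepath a b) = G ` closed_segment a b"
    "pathstart (G \<circ> linepath a b) = G a" "pathfinish (G \<circ> linepath a b) = G b"
proof -
  show "valid_path (G \<circ> linepath a b)"
    by (rule valid_path_compose_holomorphic[OF valid_path_linepath assms(1,2)]) (use assms(3) in simp)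
  show "path_image (G \<circ> linepath a b) = G ` closed_segment a b"
    by (simp add: path_image_compose)
qed (auto simp: pathstart_compose pathfinish_compose)

lemma linepath_in_seg: "0 \<le> t \<Longrightarrow> t \<le> 1 \<Longrightarrow> linepath a b t \<in> closed_segment a b"
  by (simp add: linepath_in_path)

context ctx4 begin

lemma holF: "i \<in> {1..r} \<Longrightarrow> F i holomorphic_on U"
  using derF opn by (meson holomorphic_on_open)

lemma local_chart:
  assumes i: "i \<in> {2..r}"
  obtains \<rho> where "\<rho> > 0" "ball p \<rho> \<subseteq> U" "inj_on (F i) (ball p \<rho>)" "\<forall>w\<in>ball p \<rho>. A i w \<noteq> 0"
proof -
  have i1: "i \<in> {1..r}" using i by auto
  have "deriv (F i) p = A i p" using derF[OF i1 pU] by (rule DERIV_imp_deriv)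
  then have "deriv (F i) p \<noteq> 0" using nz[OF i] by simp
  then obtain r1 where r1: "r1 > 0" "ball p r1 \<subseteq> U" "inj_on (F i) (ball p r1)"
    using has_complex_derivative_locally_injective[OF holF[OF i1] pU opn] by metis
  have "isCont (A i) p" using contA_at[OF i1 pU] .
  then have "\<forall>\<^sub>F w in at p. A i w \<noteq> 0"
    using nz[OF i] unfolding isCont_def by (rule tendsto_imp_eventually_ne)
  then obtain r2 where r2: "r2 > 0" "\<forall>w\<in>ball p r2. A i w \<noteq> 0"
    using near_point[where p=p and P="\<lambda>w. A i w \<noteq> 0"] nz[OF i] by auto
  show ?thesis
    by (rule that[of "min r1 r2"]) (use r1 r2 in \<open>auto intro: inj_on_subset\<close>)
qed

lemma case_r2:
  assumes r2: "r = 2" shows "\<exists>N. concl N"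
proof -
  have i2: "(2::nat) \<in> {2..r}" "(2::nat) \<in> {1..r}" using r2 by auto
  obtain \<rho>0 where \<rho>0: "\<rho>0 > 0" "ball p \<rho>0 \<subseteq> U" "inj_on (F 2) (ball p \<rho>0)" "\<forall>w\<in>ball p \<rho>0. A 2 w \<noteq> 0"
    using local_chart[OF i2(1)] by metis
  define S0 where "S0 = ball p \<rho>0"
  have S0: "open S0" "S0 \<subseteq> U" "p \<in> S0" using \<rho>0 by (auto simp: S0_def)
  have der: "\<And>w. w \<in> S0 \<Longrightarrow> (F 2 has_field_derivative A 2 w) (at w)" using derF[OF i2(2)] S0 by auto
  obtain G where G: "G holomorphic_on F 2 ` S0" "open (F 2 ` S0)" "\<And>w. w \<in> S0 \<Longrightarrow> G (F 2 w) = w"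
    "\<And>u. u \<in> F 2 ` S0 \<Longrightarrow> F 2 (G u) = u" "\<And>u. u \<in> F 2 ` S0 \<Longrightarrow> G u \<in> S0"
    "\<And>u. u \<in> F 2 ` S0 \<Longrightarrow> (G has_field_derivative (1 / A 2 (G u))) (at u)"
  proof (rule chart[OF S0(1), of "F 2" "A 2"])
    show "inj_on (F 2) S0" using \<rho>0 S0_def by simp
  qed (use der \<rho>0 S0_def in auto)
  have "0 \<in> F 2 ` S0" using F0[OF i2(2)] S0(3) by force
  then obtain R where R: "R > 0" "ball 0 R \<subseteq> F 2 ` S0" using G(2) openE by metis
  define N where "N = S0 \<inter> F 2 -` ball 0 R"
  have contF2: "continuous_on S0 (F 2)"
    using holF[OF i2(2)] S0(2) holomorphic_on_imp_continuous_on holomorphic_on_subset by blast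
  have N: "open N" "p \<in> N" "N \<subseteq> S0"
    using continuous_open_preimage[OF contF2 S0(1), of "ball 0 R"] S0 R F0[OF i2(2)]
    by (auto simp: N_def)
  have "concl N"
    unfolding concl_def
  proof (intro conjI ballI allI impI)
    fix \<alpha> zz assume \<alpha>: "\<alpha> \<in> N \<inter> interior Wc" and zz: "(\<forall>n. zz n \<in> U) \<and> zz \<longlonglongrightarrow> p"
    obtain e where e: "e > 0" "ball \<alpha> e \<subseteq> Wc" using \<alpha> int_ball by blast
    have \<alpha>S: "\<alpha> \<in> S0" using \<alpha> N by auto
    have neg: "Re (F 2 \<alpha>) < 0"
    proof (rule interior_strict[OF G(2) _ G(4) \<alpha>S G(3) e(1)])
      show "continuous_on (F 2 ` S0) G" using G(1) holomorphic_on_imp_continuous_on by blast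
      fix w assume "w \<in> ball \<alpha> e"
      then have "w \<in> Wc" using e by blast
      then show "Re (F 2 w) \<le> 0" using i2 by (auto simp: Wc_def)
    qed
    have zl: "zz \<longlonglongrightarrow> p" using zz by blast
    have ev1: "\<forall>\<^sub>F n in sequentially. zz n \<in> N"
      by (rule topological_tendstoD[OF zl N(1) N(2)])
    have "((\<lambda>n. F 2 (zz n)) \<longlongrightarrow> F 2 p) sequentially"
      by (rule isCont_tendsto_compose[OF contF_at[OF i2(2) pU] zl])
    from tendsto_Re[OF this] have "((\<lambda>n. Re (F 2 (zz n))) \<longlongrightarrow> 0) sequentially"
      using F0[OF i2(2)] by simp
    from order_tendstoD(1)[OF this neg] have ev2: "\<forall>\<^sub>F n in sequentially. Re (F 2 (zz n)) > Re (F 2 \<alpha>)" .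
    show "\<forall>\<^sub>F n in sequentially. good (zz n) \<alpha>"
      using ev1 ev2
    proof (rule eventually_elim2)
      fix n assume n: "zz n \<in> N" "Re (F 2 (zz n)) > Re (F 2 \<alpha>)"
      define a where "a = F 2 (zz n)"
      define b where "b = F 2 \<alpha>"
      have ab: "a \<in> ball 0 R" "b \<in> ball 0 R" using n \<alpha> by (auto simp: a_def b_def N_def)
      have seg: "closed_segment a b \<subseteq> F 2 ` S0"
        using closed_segment_subset[OF ab convex_ball] R(2) by (rule subset_trans)
      note cp = chart_path[OF G(1,2) seg]
      have nS: "zz n \<in> S0" using n N by auto
      have img: "path_image (G \<circ> linepath a b) \<subseteq> U"
      proof -
        have "G ` closed_segment a b \<subseteq> S0" using seg G(5) by (meson image_subset_iff subsetD)
        then show ?thesis using cp(2) S0(2) by simp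
      qed
      have mono: "Re (F i ((G \<circ> linepath a b) t)) \<le> Re (F i ((G \<circ> linepath a b) s))"
        if "i \<in> {1..r}" "0 \<le> s" "s \<le> t" "t \<le> 1" for i s t
      proof -
        have ts: "linepath a b t \<in> F 2 ` S0" "linepath a b s \<in> F 2 ` S0"
          using linepath_in_seg[of t a b] linepath_in_seg[of s a b] seg that by auto
        have "i = 1 \<or> i = 2" using that r2 by auto
        then show ?thesis
        proof
          assume "i = 1"
          moreover have "G (linepath a b t) \<in> U" "G (linepath a b s) \<in> U" using G(5) ts S0(2) by auto
          ultimately show ?thesis using F1 by simp
        next
          assume i: "i = 2"
          have "Re (linepath a b t) \<le> Re (linepath a b s)"
          proof -
            have "Re b < Re a" using n by (simp add: a_def b_def)
            then have "(t - s) * (Re b - Re a) \<le> 0" using that by (simp add: mult_nonneg_nonpos)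
            then show ?thesis by (simp add: linepath_def algebra_simps)
          qed
          then show ?thesis using i G(4) ts by simp
        qed
      qed
      have st: "pathstart (G \<circ> linepath a b) = zz n" "pathfinish (G \<circ> linepath a b) = \<alpha>"
        using cp(3,4) G(3)[OF nS] G(3)[OF \<alpha>S] by (simp_all add: a_def b_def)
      show "good (zz n) \<alpha>"
        unfolding good_def
        by (rule exI[of _ "G \<circ> linepath a b"]) (use cp(1) img st mono in blast)
    qed
  qed (use N in auto)
  then show ?thesis by blast
qed

end

lemma chart_seg_mono:
  fixes G Fi Ai Gd :: "complex \<Rightarrow> complex"
  assumes "\<And>u. u \<in> closed_segment a b \<Longrightarrow> (G has_field_derivative Gd u) (at u)"
    "\<And>u. u \<in> closed_segment a b \<Longrightarrow> (Fi has_field_derivative Ai (G u)) (at (G u))"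
    "\<And>u. u \<in> closed_segment a b \<Longrightarrow> Re (Ai (G u) * Gd u * (b - a)) \<le> 0"
  shows "\<forall>s t. 0 \<le> s \<and> s \<le> t \<and> t \<le> 1 \<longrightarrow> Re (Fi ((G \<circ> linepath a b) t)) \<le> Re (Fi ((G \<circ> linepath a b) s))"
proof -
  have "\<forall>s t. 0 \<le> s \<and> s \<le> t \<and> t \<le> 1 \<longrightarrow> Re (Fi (G (a + of_real t * (b - a)))) \<le> Re (Fi (G (a + of_real s * (b - a))))"
  proof (rule antitone_deriv01)
    fix t :: real assume t: "0 \<le> t" "t \<le> 1"
    have u: "a + of_real t * (b - a) \<in> closed_segment a b"
      using linepath_in_seg[OF t, of a b] by (simp add: linepath_alt)
    show "((\<lambda>t. Re (Fi (G (a + of_real t * (b - a))))) has_real_derivative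
           Re (Ai (G (a + of_real t * (b - a))) * Gd (a + of_real t * (b - a)) * (b - a))) (at t)"
      by (rule chart_line_deriv[OF assms(1)[OF u] assms(2)[OF u]])
    show "Re (Ai (G (a + of_real t * (b - a))) * Gd (a + of_real t * (b - a)) * (b - a)) \<le> 0"
      by (rule assms(3)[OF u])
  qed
  then show ?thesis by (simp add: linepath_alt o_def)
qed

lemma sign1: "b \<noteq> 0 \<Longrightarrow> Im (a * cnj b) > 0 \<Longrightarrow> Re (\<i> * a / b) < 0"
proof -
  assume b: "b \<noteq> 0" and im: "Im (a * cnj b) > 0"
  have c: "(cmod b)^2 > 0" using b by simp
  have e: "\<i> * a / b = (\<i> * (a * cnj b)) / of_real ((cmod b)^2)"
    using complex_div_cnj[of a b] by (metis mult.assoc times_divide_eq_right)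
  have r: "Re (\<i> * a / b) = - Im (a * cnj b) / (cmod b)^2"
    unfolding e Re_divide_of_real by simp
  have "- Im (a * cnj b) < 0" using im by simp
  from divide_neg_pos[OF this c] show ?thesis by (simp only: r)
qed

lemma sign2: "b \<noteq> 0 \<Longrightarrow> Im (a * cnj b) < 0 \<Longrightarrow> Re (- \<i> * a / b) < 0"
proof -
  assume b: "b \<noteq> 0" and im: "Im (a * cnj b) < 0"
  have c: "(cmod b)^2 > 0" using b by simp
  have e: "- \<i> * a / b = (- \<i> * (a * cnj b)) / of_real ((cmod b)^2)"
    using complex_div_cnj[of a b] by (metis mult.assoc times_divide_eq_right)
  have r: "Re (- \<i> * a / b) = Im (a * cnj b) / (cmod b)^2"
    unfolding e Re_divide_of_real by simp
  from divide_neg_pos[OF im c] show ?thesis by (simp only: r)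
qed

lemma ev_less:
  fixes f :: "complex \<Rightarrow> real"
  assumes "isCont f p" "f p < b"
  shows "\<forall>\<^sub>F w in at p. f w < b"
  using order_tendstoD(2)[OF assms(1)[unfolded isCont_def] assms(2)] .

lemma ev_greater:
  fixes f :: "complex \<Rightarrow> real"
  assumes "isCont f p" "f p > b"
  shows "\<forall>\<^sub>F w in at p. f w > b"
  using order_tendstoD(1)[OF assms(1)[unfolded isCont_def] assms(2)] .

lemma re_rot: "Re (a * (1/b) * (of_real t * \<i>)) = t * Re (\<i> * a / b)"
proof -
  have e: "a * (1/b) * (of_real t * \<i>) = of_real t * (\<i> * a / b)" by (simp add: field_simps)
  have "Re (of_real t * (\<i> * a / b)) = t * Re (\<i> * a / b)" by (rule Re_ofreal_mult)
  then show ?thesis by (simp only: e)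
qed
lemma re_neg_i: "Re (- \<i> * a / b) = - Re (\<i> * a / b)"
  by (simp add: field_simps)

context ctx4 begin

lemma caseB:
  assumes r3: "3 \<le> r" and B: "\<exists>d. \<forall>i\<in>{2..r}. Re (A i p * d) < 0"
  shows "\<exists>N. concl N"
proof -
  define I where "I = {2..r}"
  obtain d where d: "\<And>i. i \<in> I \<Longrightarrow> Re (A i p * d) < 0" using B I_def by blast
  have finI: "finite I" and neI: "I \<noteq> {}" using r3 by (auto simp: I_def)
  have I1: "\<And>i. i \<in> I \<Longrightarrow> i \<in> {1..r}" by (auto simp: I_def)
  have parI: "\<And>i l. i \<in> I \<Longrightarrow> l \<in> I \<Longrightarrow> i \<noteq> l \<Longrightarrow> Im (A i p * cnj (A l p)) \<noteq> 0"
    using par by (auto simp: I_def)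
  obtain k where k: "k \<in> I" "\<And>i. i \<in> I - {k} \<Longrightarrow> Im (A i p * cnj (A k p)) > 0"
    using extreme[OF finI neI, of "\<lambda>i. A i p" d] d parI by blast
  have "\<exists>j\<in>I. \<forall>i\<in>I-{j}. Im (cnj (A i p) * cnj (cnj (A j p))) > 0"
  proof (rule extreme[OF finI neI, of "\<lambda>i. cnj (A i p)" "cnj d"])
    fix i assume "i \<in> I"
    have "Re (cnj (A i p) * cnj d) = Re (A i p * d)" by (simp flip: complex_cnj_mult)
    then show "Re (cnj (A i p) * cnj d) < 0" using d[OF \<open>i \<in> I\<close>] by simp
  next
    fix i l assume "i \<in> I" "l \<in> I" "i \<noteq> l"
    have "Im (cnj (A i p) * cnj (cnj (A l p))) = - Im (A i p * cnj (A l p))"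
      by (simp flip: complex_cnj_mult)
    then show "Im (cnj (A i p) * cnj (cnj (A l p))) \<noteq> 0" using parI[OF \<open>i \<in> I\<close> \<open>l \<in> I\<close> \<open>i \<noteq> l\<close>] by simp
  qed
  then obtain j where j: "j \<in> I" "\<And>i. i \<in> I - {j} \<Longrightarrow> Im (A i p * cnj (A j p)) < 0"
  proof -
    have cc: "\<And>i j. Im (cnj (A i p) * cnj (cnj (A j p))) = - Im (A i p * cnj (A j p))"
      by (simp flip: complex_cnj_mult)
    assume "\<exists>j\<in>I. \<forall>i\<in>I-{j}. Im (cnj (A i p) * cnj (cnj (A j p))) > 0"
    then have "\<exists>j\<in>I. \<forall>i\<in>I-{j}. Im (A i p * cnj (A j p)) < 0" unfolding cc by simp
    then show ?thesis using that by blast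
  qed
  have jk: "j \<noteq> k"
  proof
    assume "j = k"
    define i where "i = (if k = 2 then 3 else 2::nat)"
    have "i \<in> I - {k}" using r3 k(1) by (auto simp: i_def I_def)
    then show False using k(2)[of i] j(2)[of i] \<open>j = k\<close> by force
  qed
  have jIk: "j \<in> I - {k}" and kIj: "k \<in> I - {j}" using j k jk by auto
  have j1: "j \<in> {1..r}" and k1: "k \<in> {1..r}" using I1 j k by auto
  have nzk: "A k p \<noteq> 0" and nzj: "A j p \<noteq> 0" using nz j k by (auto simp: I_def)
  define P1 where "P1 i w = Re (\<i> * A i w / A k w)" for i w
  define P2 where "P2 i w = Re (- \<i> * A i w / A j w)" for i w
  have P1p: "P1 i p < 0" if "i \<in> I - {k}" for i unfolding P1_def by (rule sign1[OF nzk k(2)[OF that]])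
  have P2p: "P2 i p < 0" if "i \<in> I - {j}" for i unfolding P2_def by (rule sign2[OF nzj j(2)[OF that]])
  define c where "c = - P1 j p / 2"
  have cpos: "c > 0" using P1p[OF jIk] by (simp add: c_def)
  define L where "L = cmod (A j p) + 1"
  define m where "m = cmod (A k p) / 2"
  have Lpos: "L > 0" and mpos: "m > 0" using nzk by (auto simp: L_def m_def add_nonneg_pos)
  have isc1: "isCont (P1 i) p" if "i \<in> {1..r}" for i
    unfolding P1_def using contA_at[OF that pU] contA_at[OF k1 pU] nzk
    by (intro isCont_Re isCont_divide isCont_mult) auto
  have isc2: "isCont (P2 i) p" if "i \<in> {1..r}" for i
    unfolding P2_def using contA_at[OF that pU] contA_at[OF j1 pU] nzj
    by (intro isCont_Re isCont_divide isCont_mult) auto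
  define Q where "Q w \<longleftrightarrow> w \<in> U \<and> (\<forall>i\<in>I-{k}. P1 i w < 0) \<and> P1 j w < -c \<and> (\<forall>i\<in>I-{j}. P2 i w < 0)
     \<and> cmod (A j w) < L \<and> cmod (A k w) > m" for w
  have evQ: "\<forall>\<^sub>F w in at p. Q w"
  proof -
    have e1: "\<forall>\<^sub>F w in at p. w \<in> U" using opn pU eventually_at_topological by blast
    have e2: "\<forall>\<^sub>F w in at p. \<forall>i\<in>I-{k}. P1 i w < 0"
    proof (rule eventually_ball_finite, simp add: finI, intro ballI)
      fix i assume i: "i \<in> I - {k}"
      then have "i \<in> {1..r}" using I1 by blast
      show "\<forall>\<^sub>F w in at p. P1 i w < 0" by (rule ev_less[OF isc1[OF \<open>i \<in> {1..r}\<close>] P1p[OF i]])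
    qed
    have e3: "\<forall>\<^sub>F w in at p. P1 j w < -c"
      by (rule ev_less[OF isc1[OF j1]]) (use cpos in \<open>simp add: c_def\<close>)
    have e4: "\<forall>\<^sub>F w in at p. \<forall>i\<in>I-{j}. P2 i w < 0"
    proof (rule eventually_ball_finite, simp add: finI, intro ballI)
      fix i assume i: "i \<in> I - {j}"
      then have "i \<in> {1..r}" using I1 by blast
      show "\<forall>\<^sub>F w in at p. P2 i w < 0" by (rule ev_less[OF isc2[OF \<open>i \<in> {1..r}\<close>] P2p[OF i]])
    qed
    have e5: "\<forall>\<^sub>F w in at p. cmod (A j w) < L"
      by (rule ev_less[where f="\<lambda>w. cmod (A j w)"]) (use contA_at[OF j1 pU] in \<open>simp_all add: L_def\<close>)
    have e6: "\<forall>\<^sub>F w in at p. cmod (A k w) > m"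
      by (rule ev_greater[where f="\<lambda>w. cmod (A k w)"]) (use contA_at[OF k1 pU] nzk in \<open>simp_all add: m_def\<close>)
    have "\<forall>\<^sub>F w in at p. w \<in> U \<and> (\<forall>i\<in>I-{k}. P1 i w < 0) \<and> P1 j w < -c \<and> (\<forall>i\<in>I-{j}. P2 i w < 0)
     \<and> cmod (A j w) < L \<and> cmod (A k w) > m"
      by (intro eventually_conj e1 e2 e3 e4 e5 e6)
    then show ?thesis unfolding Q_def .
  qed
  have Qp: "Q p" unfolding Q_def
  proof (intro conjI ballI)
    show "P1 j p < - c" using cpos by (simp add: c_def)
    show "cmod (A j p) < L" by (simp add: L_def)
    show "m < cmod (A k p)" using nzk by (simp add: m_def)
  qed (use pU P1p P2p in auto)
  obtain \<rho>1 where \<rho>1: "\<rho>1 > 0" "\<And>w. w \<in> ball p \<rho>1 \<Longrightarrow> Q w"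
    using near_point[where p=p and P=Q, OF evQ Qp] by blast
  have jI2: "j \<in> {2..r}" and kI2: "k \<in> {2..r}" using j(1) k(1) I_def by auto
  obtain \<rho>j where \<rho>j: "\<rho>j > 0" "ball p \<rho>j \<subseteq> U" "inj_on (F j) (ball p \<rho>j)"
    by (rule local_chart[OF jI2])
  obtain \<rho>k where \<rho>k: "\<rho>k > 0" "ball p \<rho>k \<subseteq> U" "inj_on (F k) (ball p \<rho>k)"
    by (rule local_chart[OF kI2])
  define \<rho>0 where "\<rho>0 = min \<rho>1 (min \<rho>j \<rho>k)"
  define S0 where "S0 = ball p \<rho>0"
  have S0: "open S0" "p \<in> S0" "convex S0" using \<rho>1 \<rho>j \<rho>k by (auto simp: S0_def \<rho>0_def)
  have S0Q: "\<And>w. w \<in> S0 \<Longrightarrow> Q w" using \<rho>1 by (auto simp: S0_def \<rho>0_def)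
  have S0Q': "\<And>w. w \<in> S0 \<Longrightarrow> w \<in> U \<and> (\<forall>i\<in>I-{k}. P1 i w < 0) \<and> P1 j w < -c \<and> (\<forall>i\<in>I-{j}. P2 i w < 0)
     \<and> cmod (A j w) < L \<and> cmod (A k w) > m" using S0Q unfolding Q_def .
  have S0U: "S0 \<subseteq> U" using S0Q' by blast
  have injj: "inj_on (F j) S0" using \<rho>j(3) by (rule inj_on_subset) (auto simp: S0_def \<rho>0_def)
  have injk: "inj_on (F k) S0" using \<rho>k(3) by (rule inj_on_subset) (auto simp: S0_def \<rho>0_def)
  have derS: "\<And>i w. i \<in> {1..r} \<Longrightarrow> w \<in> S0 \<Longrightarrow> (F i has_field_derivative A i w) (at w)"
    using derF S0U by blast
  have Akm: "\<And>w. w \<in> S0 \<Longrightarrow> cmod (A k w) > m" and AjL: "\<And>w. w \<in> S0 \<Longrightarrow> cmod (A j w) < L"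
    using S0Q' by auto
  have nzkS: "A k w \<noteq> 0" if "w \<in> S0" for w using Akm[OF that] mpos by auto
  have nzjS: "\<And>w. w \<in> S0 \<Longrightarrow> A j w \<noteq> 0"
  proof -
    fix w assume w: "w \<in> S0"
    have "P1 j w < -c" using S0Q'[OF w] by blast
    then show "A j w \<noteq> 0" using cpos by (auto simp: P1_def)
  qed
  obtain Gk where Gk: "Gk holomorphic_on F k ` S0" "open (F k ` S0)" "\<And>w. w \<in> S0 \<Longrightarrow> Gk (F k w) = w"
    "\<And>u. u \<in> F k ` S0 \<Longrightarrow> F k (Gk u) = u" "\<And>u. u \<in> F k ` S0 \<Longrightarrow> Gk u \<in> S0"
    "\<And>u. u \<in> F k ` S0 \<Longrightarrow> (Gk has_field_derivative (1 / A k (Gk u))) (at u)"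
    by (rule chart[OF S0(1) injk]) (use derS[OF k1] nzkS in auto)
  obtain Gj where Gj: "Gj holomorphic_on F j ` S0" "open (F j ` S0)" "\<And>w. w \<in> S0 \<Longrightarrow> Gj (F j w) = w"
    "\<And>u. u \<in> F j ` S0 \<Longrightarrow> F j (Gj u) = u" "\<And>u. u \<in> F j ` S0 \<Longrightarrow> Gj u \<in> S0"
    "\<And>u. u \<in> F j ` S0 \<Longrightarrow> (Gj has_field_derivative (1 / A j (Gj u))) (at u)"
    by (rule chart[OF S0(1) injj]) (use derS[OF j1] nzjS in auto)
  have "0 \<in> F k ` S0 \<inter> F j ` S0" using F0[OF k1] F0[OF j1] S0(2) by force
  moreover have "open (F k ` S0 \<inter> F j ` S0)" using Gk(2) Gj(2) by blast
  ultimately obtain R where R: "R > 0" "ball 0 R \<subseteq> F k ` S0 \<inter> F j ` S0" by (meson openE)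
  have RK: "ball 0 R \<subseteq> F k ` S0" and RJ: "ball 0 R \<subseteq> F j ` S0" using R by auto
  have FjL: "cmod (F j w) \<le> L * cmod (w - p)" if "w \<in> S0" for w
  proof -
    have "norm (F j w - F j p) \<le> L * norm (w - p)"
      by (rule field_differentiable_bound[OF S0(3), of "F j" "A j"])
         (use derS[OF j1] AjL that S0(2) in \<open>auto intro: has_field_derivative_at_within less_imp_le\<close>)
    then show ?thesis using F0[OF j1] by simp
  qed
  have Gk0: "Gk 0 = p" using Gk(3)[OF S0(2)] F0[OF k1] by simp
  have GkL: "cmod (Gk u - p) \<le> (1/m) * cmod u" if "u \<in> ball 0 R" for u
  proof -
    have "norm (Gk u - Gk 0) \<le> (1/m) * norm (u - 0)"
    proof (rule field_differentiable_bound[where S="ball 0 R" and f=Gk and f'="\<lambda>u. 1 / A k (Gk u)" and B="1/m"])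
      show "convex (ball (0::complex) R)" by simp
      fix x assume x: "x \<in> ball (0::complex) R"
      then have xk: "x \<in> F k ` S0" using RK by blast
      show "(Gk has_field_derivative 1 / A k (Gk x)) (at x within ball 0 R)"
        using Gk(6)[OF xk] by (rule has_field_derivative_at_within)
      have "cmod (A k (Gk x)) > m" using Akm Gk(5)[OF xk] by blast
      then show "norm (1 / A k (Gk x)) \<le> 1/m" using mpos
        by (simp add: norm_divide divide_simps)
    qed (use that R in auto)
    then show ?thesis using Gk0 by simp
  qed
  define T where "T = min (R/2) (m * R / (2 * L))"
  have Tpos: "T > 0" using R mpos Lpos by (simp add: T_def)
  define \<rho>' where "\<rho>' = min \<rho>0 (min (c * T / (2 * L)) (R / L))"
  define N where "N = ball p \<rho>'"
  have NS0: "N \<subseteq> S0" by (auto simp: N_def S0_def \<rho>'_def)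
  have \<rho>'pos: "\<rho>' > 0" using \<rho>1 \<rho>j \<rho>k cpos Tpos Lpos R by (simp add: \<rho>'_def \<rho>0_def)
  have "concl N"
    unfolding concl_def
  proof (intro conjI ballI allI impI)
    fix \<alpha> zz assume \<alpha>: "\<alpha> \<in> N \<inter> interior Wc" and zz: "(\<forall>n. zz n \<in> U) \<and> zz \<longlonglongrightarrow> p"
    have \<alpha>N: "\<alpha> \<in> N" and \<alpha>int: "\<alpha> \<in> interior Wc" using \<alpha> by auto
    have \<alpha>S: "\<alpha> \<in> S0" using \<alpha>N NS0 by blast
    obtain e where e: "e > 0" "ball \<alpha> e \<subseteq> Wc" using int_ball[OF \<alpha>int] by blast
    have Wle: "Re (F i w) \<le> 0" if "w \<in> ball \<alpha> e" "i \<in> {1..r}" for w i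
      using e(2) that by (auto simp: Wc_def)
    have negj: "Re (F j \<alpha>) < 0"
    proof (rule interior_strict[OF Gj(2) _ Gj(4) \<alpha>S Gj(3) e(1)])
      show "continuous_on (F j ` S0) Gj" using Gj(1) holomorphic_on_imp_continuous_on by blast
      show "\<And>w. w \<in> ball \<alpha> e \<Longrightarrow> Re (F j w) \<le> 0" using Wle j1 by blast
    qed
    have negk: "Re (F k \<alpha>) < 0"
    proof (rule interior_strict[OF Gk(2) _ Gk(4) \<alpha>S Gk(3) e(1)])
      show "continuous_on (F k ` S0) Gk" using Gk(1) holomorphic_on_imp_continuous_on by blast
      show "\<And>w. w \<in> ball \<alpha> e \<Longrightarrow> Re (F k w) \<le> 0" using Wle k1 by blast
    qed
    have \<alpha>p: "cmod (\<alpha> - p) < \<rho>'" using \<alpha>N by (simp add: N_def dist_norm norm_minus_commute)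
    have Fj\<alpha>: "cmod (F j \<alpha>) < L * \<rho>'"
      using FjL[OF \<alpha>S] mult_strict_left_mono[OF \<alpha>p Lpos] by linarith
    have "L * \<rho>' \<le> L * (R / L)" using Lpos by (intro mult_left_mono) (auto simp: \<rho>'_def)
    then have Fj\<alpha>R: "F j \<alpha> \<in> ball 0 R" using Fj\<alpha> Lpos by simp
    have "L * \<rho>' \<le> L * (c * T / (2 * L))" using Lpos by (intro mult_left_mono) (auto simp: \<rho>'_def)
    then have "cmod (F j \<alpha>) < c * T / 2" using Fj\<alpha> Lpos by simp
    then have Fj\<alpha>2: "Re (F j \<alpha>) > - (c * T / 2)" using abs_Re_le_cmod[of "F j \<alpha>"] by linarith
    have zl: "zz \<longlonglongrightarrow> p" using zz by blast
    have ev1: "\<forall>\<^sub>F n in sequentially. zz n \<in> S0"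
      by (rule topological_tendstoD[OF zl S0(1) S0(2)])
    have limk: "((\<lambda>n. F k (zz n)) \<longlongrightarrow> 0) sequentially"
      using isCont_tendsto_compose[OF contF_at[OF k1 pU] zl] F0[OF k1] by simp
    have limj: "((\<lambda>n. F j (zz n)) \<longlongrightarrow> 0) sequentially"
      using isCont_tendsto_compose[OF contF_at[OF j1 pU] zl] F0[OF j1] by simp
    have ev2: "\<forall>\<^sub>F n in sequentially. cmod (F k (zz n)) < T"
      using order_tendstoD(2)[OF tendsto_norm[OF limk]] Tpos by simp
    have limjr: "((\<lambda>n. Re (F j (zz n))) \<longlongrightarrow> 0) sequentially" using tendsto_Re[OF limj] by simp
    have limkr: "((\<lambda>n. Re (F k (zz n))) \<longlongrightarrow> 0) sequentially" using tendsto_Re[OF limk] by simp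
    have ev3: "\<forall>\<^sub>F n in sequentially. Re (F j (zz n)) < c * T / 2"
      using order_tendstoD(2)[OF limjr, of "c * T / 2"] cpos Tpos by simp
    have ev4: "\<forall>\<^sub>F n in sequentially. Re (F j (zz n)) > Re (F j \<alpha>)"
      using order_tendstoD(1)[OF limjr negj] .
    have ev5: "\<forall>\<^sub>F n in sequentially. Re (F k (zz n)) > Re (F k \<alpha>)"
      using order_tendstoD(1)[OF limkr negk] .
    have evall: "\<forall>\<^sub>F n in sequentially. zz n \<in> S0 \<and> cmod (F k (zz n)) < T \<and> Re (F j (zz n)) < c * T / 2
        \<and> Re (F j (zz n)) > Re (F j \<alpha>) \<and> Re (F k (zz n)) > Re (F k \<alpha>)"
      by (intro eventually_conj ev1 ev2 ev3 ev4 ev5)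
    show "\<forall>\<^sub>F n in sequentially. good (zz n) \<alpha>"
      using evall
    proof (rule eventually_mono)
      fix n assume nn: "zz n \<in> S0 \<and> cmod (F k (zz n)) < T \<and> Re (F j (zz n)) < c * T / 2
        \<and> Re (F j (zz n)) > Re (F j \<alpha>) \<and> Re (F k (zz n)) > Re (F k \<alpha>)"
      define z where "z = zz n"
      have zS: "z \<in> S0" and zT: "cmod (F k z) < T" and zj: "Re (F j z) < c * T / 2"
        and zj2: "Re (F j z) > Re (F j \<alpha>)" and zk: "Re (F k z) > Re (F k \<alpha>)"
        using nn by (simp_all add: z_def)
      define u0 where "u0 = F k z"
      have Gku0: "Gk u0 = z" using Gk(3)[OF zS] by (simp add: u0_def)
      have inball: "u0 + of_real t * \<i> \<in> ball 0 R" if "0 \<le> t" "t \<le> T" for t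
      proof -
        have "cmod (u0 + of_real t * \<i>) \<le> cmod u0 + cmod (of_real t * \<i>)" by (rule norm_triangle_ineq)
        also have "\<dots> = cmod u0 + t" using that by (simp add: norm_mult)
        also have "\<dots> < T + T" using zT that by (simp add: u0_def)
        also have "\<dots> \<le> R" by (simp add: T_def)
        finally show ?thesis by simp
      qed
      have inK: "u0 + of_real t * \<i> \<in> F k ` S0" if "0 \<le> t" "t \<le> T" for t
        using inball[OF that] RK by blast
      define \<phi> where "\<phi> t = Re (F j (Gk (u0 + of_real t * \<i>)))" for t
      have \<phi>der: "(\<phi> has_real_derivative P1 j (Gk (u0 + of_real t * \<i>))) (at t)" if "0 \<le> t" "t \<le> T" for t
      proof -
        let ?u = "u0 + of_real t * \<i>"
        have "((\<lambda>t. Re (F j (Gk (u0 + of_real t * \<i>)))) has_real_derivative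
               Re (A j (Gk ?u) * (1 / A k (Gk ?u)) * \<i>)) (at t)"
          by (rule chart_line_deriv[OF Gk(6)[OF inK[OF that]] derS[OF j1 Gk(5)[OF inK[OF that]]]])
        moreover have "Re (A j (Gk ?u) * (1 / A k (Gk ?u)) * \<i>) = P1 j (Gk ?u)"
          using re_rot[of "A j (Gk ?u)" "A k (Gk ?u)" 1] by (simp add: P1_def)
        ultimately show ?thesis unfolding \<phi>_def by simp
      qed
      have P1jS: "P1 j w < -c" if "w \<in> S0" for w using S0Q'[OF that] by blast
      have \<psi>: "\<phi> T + c * T \<le> \<phi> 0 + c * 0"
      proof (rule antitone_deriv[where f="\<lambda>t. \<phi> t + c * t" and a=0 and b=T])
        fix t assume t: "0 \<le> t" "t \<le> T"
        show "((\<lambda>t. \<phi> t + c * t) has_real_derivative (P1 j (Gk (u0 + of_real t * \<i>)) + c)) (at t)"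
          by (rule DERIV_add[OF \<phi>der[OF t] DERIV_cmult_Id])
        show "P1 j (Gk (u0 + of_real t * \<i>)) + c \<le> 0"
          using P1jS[OF Gk(5)[OF inK[OF t]]] by simp
      qed (use Tpos in auto)
      have \<phi>0: "\<phi> 0 = Re (F j z)" using Gku0 by (simp add: \<phi>_def)
      have \<phi>T: "\<phi> T \<le> Re (F j \<alpha>)" using \<psi> \<phi>0 zj Fj\<alpha>2 by simp
      have cont\<phi>: "continuous_on {0..T} \<phi>"
      proof (rule continuous_at_imp_continuous_on, intro ballI)
        fix x assume "x \<in> {0..T}"
        then have "0 \<le> x" "x \<le> T" by auto
        from DERIV_isCont[OF \<phi>der[OF this]] show "isCont \<phi> x" .
      qed
      obtain ts where ts: "0 \<le> ts" "ts \<le> T" "\<phi> ts = Re (F j \<alpha>)"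
        using IVT2'[where f=\<phi> and a=0 and b=T and y="Re (F j \<alpha>)", OF \<phi>T _ _ cont\<phi>] \<phi>0 zj2 Tpos by auto
      define u1 where "u1 = u0 + of_real ts * \<i>"
      define q where "q = Gk u1"
      have u1R: "u1 \<in> ball 0 R" using inball[OF ts(1,2)] by (simp add: u1_def)
      have u1K: "u1 \<in> F k ` S0" using u1R RK by blast
      have qS: "q \<in> S0" using Gk(5)[OF u1K] by (simp add: q_def)
      have Fkq: "F k q = u1" using Gk(4)[OF u1K] by (simp add: q_def)
      have Fjq: "Re (F j q) = Re (F j \<alpha>)" using ts(3) by (simp add: \<phi>_def q_def u1_def)
      have "cmod u1 \<le> cmod u0 + ts"
        using norm_triangle_ineq[of u0 "of_real ts * \<i>"] ts by (simp add: u1_def norm_mult)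
      then have u1T: "cmod u1 < 2 * T" using zT ts by (simp add: u0_def)
      have "cmod (q - p) \<le> (1/m) * cmod u1" using GkL[OF u1R] by (simp add: q_def)
      also have "\<dots> < (1/m) * (2 * T)" using u1T mpos by (intro mult_strict_left_mono) auto
      also have "\<dots> \<le> R / L"
      proof -
        have "T \<le> m * R / (2 * L)" by (simp add: T_def)
        then have "2 * T \<le> m * R / L" using Lpos by (simp add: field_simps)
        then show ?thesis using mpos Lpos by (simp add: field_simps)
      qed
      finally have qp: "cmod (q - p) < R / L" .
      have "cmod (F j q) \<le> L * cmod (q - p)" by (rule FjL[OF qS])
      also have "\<dots> < L * (R / L)" using qp Lpos by (intro mult_strict_left_mono) auto
      finally have FjqR: "F j q \<in> ball 0 R" using Lpos by simp
      have u0R: "u0 \<in> ball 0 R" using inball[of 0] Tpos by simp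
      have seg1: "closed_segment u0 u1 \<subseteq> F k ` S0"
        using closed_segment_subset[OF u0R u1R convex_ball] RK by (rule subset_trans)
      have seg2: "closed_segment (F j q) (F j \<alpha>) \<subseteq> F j ` S0"
        using closed_segment_subset[OF FjqR Fj\<alpha>R convex_ball] RJ by (rule subset_trans)
      note cp1 = chart_path[OF Gk(1,2) seg1]
      note cp2 = chart_path[OF Gj(1,2) seg2]
      define \<gamma>1 where "\<gamma>1 = Gk \<circ> linepath u0 u1"
      define \<gamma>2 where "\<gamma>2 = Gj \<circ> linepath (F j q) (F j \<alpha>)"
      have s1: "pathstart \<gamma>1 = z" "pathfinish \<gamma>1 = q"
        using cp1(3,4) Gku0 by (simp_all add: \<gamma>1_def q_def)
      have s2: "pathstart \<gamma>2 = q" "pathfinish \<gamma>2 = \<alpha>"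
        using cp2(3,4) Gj(3)[OF qS] Gj(3)[OF \<alpha>S] by (simp_all add: \<gamma>2_def)
      have img1: "path_image \<gamma>1 \<subseteq> S0"
      proof -
        have "Gk ` closed_segment u0 u1 \<subseteq> S0" using seg1 Gk(5) by (meson image_subset_iff subsetD)
        then show ?thesis using cp1(2) by (simp add: \<gamma>1_def)
      qed
      have img2: "path_image \<gamma>2 \<subseteq> S0"
      proof -
        have "Gj ` closed_segment (F j q) (F j \<alpha>) \<subseteq> S0" using seg2 Gj(5) by (meson image_subset_iff subsetD)
        then show ?thesis using cp2(2) by (simp add: \<gamma>2_def)
      qed
      have iI: "i = 1 \<or> i \<in> I" if "i \<in> {1..r}" for i using that by (auto simp: I_def)
      have d1: "u1 - u0 = of_real ts * \<i>" by (simp add: u1_def)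
      have mono1: "\<forall>s t. 0 \<le> s \<and> s \<le> t \<and> t \<le> 1 \<longrightarrow> Re (F i (\<gamma>1 t)) \<le> Re (F i (\<gamma>1 s))"
        if i: "i \<in> {1..r}" for i
      proof (cases "i = k")
        case True
        have eqc: "Re (F i (\<gamma>1 t)) = Re u0" if "0 \<le> t" "t \<le> 1" for t
        proof -
          have "linepath u0 u1 t \<in> F k ` S0" using linepath_in_seg[OF that] seg1 by blast
          then have "F k (\<gamma>1 t) = linepath u0 u1 t" using Gk(4) by (simp add: \<gamma>1_def)
          then show ?thesis using True by (simp add: linepath_alt d1)
        qed
        show ?thesis
        proof (intro allI impI)
          fix s' t' :: real assume st: "0 \<le> s' \<and> s' \<le> t' \<and> t' \<le> 1"
          then have "0 \<le> t'" "t' \<le> 1" "0 \<le> s'" "s' \<le> 1" by auto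
          then show "Re (F i (\<gamma>1 t')) \<le> Re (F i (\<gamma>1 s'))" using eqc by simp
        qed
      next
        case False
        show ?thesis unfolding \<gamma>1_def
        proof (rule chart_seg_mono[where Gd="\<lambda>u. 1 / A k (Gk u)" and Ai="A i"])
          fix u assume u: "u \<in> closed_segment u0 u1"
          then have uK: "u \<in> F k ` S0" using seg1 by blast
          show "(Gk has_field_derivative 1 / A k (Gk u)) (at u)" by (rule Gk(6)[OF uK])
          show "(F i has_field_derivative A i (Gk u)) (at (Gk u))" by (rule derS[OF i Gk(5)[OF uK]])
          have wS: "Gk u \<in> S0" by (rule Gk(5)[OF uK])
          have "Re (A i (Gk u) * (1 / A k (Gk u)) * (u1 - u0)) = ts * P1 i (Gk u)"
            unfolding d1 P1_def by (rule re_rot)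
          moreover have "P1 i (Gk u) \<le> 0"
            using iI[OF i]
          proof
            assume "i = 1"
            then show ?thesis using A1 wS S0U by (auto simp: P1_def)
          next
            assume "i \<in> I"
            then have "i \<in> I - {k}" using False by blast
            then show ?thesis using S0Q'[OF wS] by (meson less_imp_le)
          qed
          ultimately show "Re (A i (Gk u) * (1 / A k (Gk u)) * (u1 - u0)) \<le> 0"
            using ts(1) by (simp add: mult_nonneg_nonpos)
        qed
      qed
      define v2 where "v2 = F j \<alpha> - F j q"
      define s where "s = Im v2"
      have v2: "v2 = of_real s * \<i>" using Fjq by (simp add: v2_def s_def complex_eq_iff)
      have Fkqr: "Re (F k q) = Re (F k z)" using Fkq by (simp add: u1_def u0_def)
      have s0: "s \<le> 0"
      proof (rule ccontr)
        assume "\<not> s \<le> 0"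
        then have spos: "s > 0" by simp
        have "\<forall>a b. 0 \<le> a \<and> a \<le> b \<and> b \<le> 1 \<longrightarrow> Re ((\<lambda>w. - F k w) (\<gamma>2 b)) \<le> Re ((\<lambda>w. - F k w) (\<gamma>2 a))"
          unfolding \<gamma>2_def
        proof (rule chart_seg_mono[where Gd="\<lambda>u. 1 / A j (Gj u)" and Ai="\<lambda>w. - A k w"])
          fix u assume u: "u \<in> closed_segment (F j q) (F j \<alpha>)"
          then have uJ: "u \<in> F j ` S0" using seg2 by blast
          have wS: "Gj u \<in> S0" by (rule Gj(5)[OF uJ])
          show "(Gj has_field_derivative 1 / A j (Gj u)) (at u)" by (rule Gj(6)[OF uJ])
          show "((\<lambda>w. - F k w) has_field_derivative - A k (Gj u)) (at (Gj u))"
            by (rule DERIV_minus[OF derS[OF k1 wS]])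
          have "Re (- A k (Gj u) * (1 / A j (Gj u)) * (F j \<alpha> - F j q)) = s * Re (\<i> * (- A k (Gj u)) / A j (Gj u))"
            unfolding v2_def[symmetric] v2 by (rule re_rot)
          also have "\<dots> = s * P2 k (Gj u)" by (simp add: P2_def)
          also have "\<dots> \<le> 0"
            using S0Q'[OF wS] kIj spos by (meson less_imp_le mult_pos_neg)
          finally show "Re (- A k (Gj u) * (1 / A j (Gj u)) * (F j \<alpha> - F j q)) \<le> 0" .
        qed
        then have "Re (- F k (\<gamma>2 1)) \<le> Re (- F k (\<gamma>2 0))" by force
        moreover have "\<gamma>2 1 = \<alpha>" "\<gamma>2 0 = q" using s2 by (simp_all add: pathstart_def pathfinish_def)
        ultimately have "Re (F k q) \<le> Re (F k \<alpha>)" by simp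
        then show False using Fkqr zk by simp
      qed
      have mono2: "\<forall>s t. 0 \<le> s \<and> s \<le> t \<and> t \<le> 1 \<longrightarrow> Re (F i (\<gamma>2 t)) \<le> Re (F i (\<gamma>2 s))"
        if i: "i \<in> {1..r}" for i
      proof (cases "i = j")
        case True
        have eqc: "Re (F i (\<gamma>2 t)) = Re (F j q)" if "0 \<le> t" "t \<le> 1" for t
        proof -
          have "linepath (F j q) (F j \<alpha>) t \<in> F j ` S0" using linepath_in_seg[OF that] seg2 by blast
          then have "F j (\<gamma>2 t) = linepath (F j q) (F j \<alpha>) t" using Gj(4) by (simp add: \<gamma>2_def)
          then show ?thesis using True v2 by (simp add: linepath_alt v2_def[symmetric])
        qed
        show ?thesis
        proof (intro allI impI)
          fix s' t' :: real assume st: "0 \<le> s' \<and> s' \<le> t' \<and> t' \<le> 1"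
          then have "0 \<le> t'" "t' \<le> 1" "0 \<le> s'" "s' \<le> 1" by auto
          then show "Re (F i (\<gamma>2 t')) \<le> Re (F i (\<gamma>2 s'))" using eqc by simp
        qed
      next
        case False
        show ?thesis unfolding \<gamma>2_def
        proof (rule chart_seg_mono[where Gd="\<lambda>u. 1 / A j (Gj u)" and Ai="A i"])
          fix u assume u: "u \<in> closed_segment (F j q) (F j \<alpha>)"
          then have uJ: "u \<in> F j ` S0" using seg2 by blast
          show "(Gj has_field_derivative 1 / A j (Gj u)) (at u)" by (rule Gj(6)[OF uJ])
          show "(F i has_field_derivative A i (Gj u)) (at (Gj u))" by (rule derS[OF i Gj(5)[OF uJ]])
          have wS: "Gj u \<in> S0" by (rule Gj(5)[OF uJ])
          have "Re (A i (Gj u) * (1 / A j (Gj u)) * (F j \<alpha> - F j q)) = s * Re (\<i> * A i (Gj u) / A j (Gj u))"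
            unfolding v2_def[symmetric] v2 by (rule re_rot)
          also have "\<dots> = (- s) * P2 i (Gj u)" by (simp add: P2_def re_neg_i)
          also have "\<dots> \<le> 0"
            using iI[OF i]
          proof
            assume "i = 1"
            then show ?thesis using A1 wS S0U by (auto simp: P2_def)
          next
            assume "i \<in> I"
            then have "i \<in> I - {j}" using False by blast
            then have "P2 i (Gj u) < 0" using S0Q'[OF wS] by blast
            then show ?thesis using s0 by (simp add: mult_nonpos_nonpos)
          qed
          finally show "Re (A i (Gj u) * (1 / A j (Gj u)) * (F j \<alpha> - F j q)) \<le> 0" .
        qed
      qed
      have "valid_path (\<gamma>1 +++ \<gamma>2)" using cp1(1) cp2(1) s1 s2 by (simp add: \<gamma>1_def \<gamma>2_def)
      moreover have "path_image (\<gamma>1 +++ \<gamma>2) \<subseteq> U"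
        using path_image_join_subset[of \<gamma>1 \<gamma>2] img1 img2 S0U by blast
      moreover have "pathstart (\<gamma>1 +++ \<gamma>2) = z" "pathfinish (\<gamma>1 +++ \<gamma>2) = \<alpha>" using s1 s2 by simp_all
      moreover have "\<forall>i\<in>{1..r}. \<forall>s t. 0 \<le> s \<and> s \<le> t \<and> t \<le> 1 \<longrightarrow>
          Re (F i ((\<gamma>1 +++ \<gamma>2) t)) \<le> Re (F i ((\<gamma>1 +++ \<gamma>2) s))"
      proof
        fix i assume i: "i \<in> {1..r}"
        show "\<forall>s t. 0 \<le> s \<and> s \<le> t \<and> t \<le> 1 \<longrightarrow> Re (F i ((\<gamma>1 +++ \<gamma>2) t)) \<le> Re (F i ((\<gamma>1 +++ \<gamma>2) s))"
          using antitone_join[of \<gamma>1 \<gamma>2 "\<lambda>w. Re (F i w)", OF _ mono1[OF i] mono2[OF i]] s1 s2 by simp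
      qed
      ultimately show "good (zz n) \<alpha>" unfolding good_def z_def by blast
    qed
  qed (use \<rho>'pos in \<open>auto simp: N_def\<close>)
  then show ?thesis by blast
qed

end

context ctx4 begin
lemma main: "\<exists>N. concl N"
proof -
  consider "r = 1" | "r = 2" | "3 \<le> r" using r1 by linarith
  then show ?thesis
  proof cases
    case 1 then show ?thesis by (rule case_r1)
  next
    case 2 then show ?thesis by (rule case_r2)
  next
    case 3
    show ?thesis
    proof (cases "\<exists>d. \<forall>i\<in>{2..r}. Re (A i p * d) < 0")
      case True then show ?thesis using caseB[OF 3] by blast
    next
      case False then show ?thesis using caseA[of] 3 by simp
    qed
  qed
qed
end

lemma par_from:
  fixes a b :: complex
  assumes "a \<notin> {of_real t * b | t. True}" "b \<noteq> 0"
  shows "Im (a * cnj b) \<noteq> 0"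
proof
  assume im: "Im (a * cnj b) = 0"
  define x where "x = a * cnj b"
  have x: "x = of_real (Re x)" using im by (simp add: x_def complex_eq_iff)
  have bb: "b * cnj b = of_real ((cmod b)^2)" using complex_norm_square[of b] by simp
  have nb: "(cmod b)^2 \<noteq> 0" using assms(2) by simp
  have "a * of_real ((cmod b)^2) = x * b" unfolding bb[symmetric] x_def by (simp add: mult_ac)
  also have "\<dots> = of_real (Re x) * b" using x by metis
  finally have "a = of_real (Re x / (cmod b)^2) * b" using nb
    by (simp add: field_simps)
  then show False using assms(1) by blast
qed

theorem lemma4:
  fixes U :: "complex set" and \<Phi> :: "complex \<Rightarrow> complex" and r :: nat
    and M :: "nat \<Rightarrow> complex set" and A :: "nat \<Rightarrow> complex \<Rightarrow> complex" and p :: complex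
  assumes "open U" "connected U" "simply_connected U"
    and "Sigma_class U \<Phi>"
    and "piecewise_analytic U \<Phi> r M A"
    and "1 \<le> r"
    and "\<forall>z\<in>U. A 1 z = 0"
    and "p \<in> U"
    and "\<forall>i\<in>{1..r}. p \<in> closure (M i)"
    and "\<forall>i\<in>{1..r}. \<forall>j\<in>{1..r}. \<forall>k\<in>{1..r}. i \<noteq> j \<and> j \<noteq> k \<and> i \<noteq> k \<longrightarrow>
           A i p - A k p \<notin> {of_real t * (A j p - A k p) | t. True}"
    and "\<forall>i\<in>{1..r}. \<forall>k\<in>{1..r}. i \<noteq> k \<longrightarrow> A i p \<noteq> A k p"
  defines "W \<equiv> {z \<in> U. Max ((\<lambda>i. Hfun U p (A i) z) ` {1..r}) = 0}"
    and "V \<equiv> Vset U r (\<lambda>i. Hfun U p (A i))"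
  shows "\<exists>N. open N \<and> p \<in> N \<and>
           (\<forall>\<alpha> \<in> N \<inter> interior W. \<forall>z :: nat \<Rightarrow> complex.
              (\<forall>n. z n \<in> U) \<and> z \<longlonglongrightarrow> p \<longrightarrow> (\<forall>\<^sub>F n in sequentially. \<alpha> \<in> V (z n)))"
proof -
  note opn = assms(1) and conn = assms(2) and pU = assms(8)
  have anal: "\<And>i. i \<in> {1..r} \<Longrightarrow> A i analytic_on U"
    using assms(5) unfolding piecewise_analytic_def by blast
  have hol: "\<And>i. i \<in> {1..r} \<Longrightarrow> A i holomorphic_on U"
    using anal analytic_imp_holomorphic by blast
  have prim: "\<exists>h. \<forall>z. z \<in> U \<longrightarrow> (h has_field_derivative A i z) (at z)" if "i \<in> {1..r}" for i
    using assms(3)[unfolded simply_connected_eq_global_primitive[OF opn]] hol[OF that] by blast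
  define h where "h i = (SOME h. \<forall>z. z \<in> U \<longrightarrow> (h has_field_derivative A i z) (at z))" for i
  have hder: "(h i has_field_derivative A i z) (at z)" if i: "i \<in> {1..r}" and z: "z \<in> U" for i z
  proof -
    have "\<forall>z. z \<in> U \<longrightarrow> (h i has_field_derivative A i z) (at z)"
      unfolding h_def by (rule someI_ex[OF prim[OF i]])
    then show ?thesis using z by blast
  qed
  define Fn where "Fn = (\<lambda>i z. h i z - h i p)"
  have derF: "\<And>i w. i \<in> {1..r} \<Longrightarrow> w \<in> U \<Longrightarrow> (Fn i has_field_derivative A i w) (at w)"
  proof -
    fix i w assume "i \<in> {1..r}" "w \<in> U"
    from DERIV_diff[OF hder[OF this] DERIV_const[of "h i p"]]
    show "(Fn i has_field_derivative A i w) (at w)" by (simp add: Fn_def)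
  qed
  have F0: "\<And>i. i \<in> {1..r} \<Longrightarrow> Fn i p = 0" by (simp add: Fn_def)
  have one: "(1::nat) \<in> {1..r}" using assms(6) by simp
  have A1: "\<And>w. w \<in> U \<Longrightarrow> A 1 w = 0" using assms(7) by blast
  have F1: "\<And>w. w \<in> U \<Longrightarrow> Fn 1 w = 0"
  proof -
    have "continuous_on U (Fn 1)"
      using derF[OF one] opn by (meson DERIV_isCont continuous_at_imp_continuous_on)
    moreover have "\<forall>x\<in>U - {}. (Fn 1 has_field_derivative 0) (at x)"
    proof
      fix x assume "x \<in> U - {}"
      then have "x \<in> U" by simp
      then show "(Fn 1 has_field_derivative 0) (at x)" using derF[OF one \<open>x \<in> U\<close>] A1[OF \<open>x \<in> U\<close>] by simp
    qed
    ultimately obtain c where c: "\<And>x. x \<in> U \<Longrightarrow> Fn 1 x = c"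
      using DERIV_zero_connected_constant[OF conn opn, of "{}" "Fn 1"] by auto
    have "c = 0" using c[OF pU] F0[OF one] by simp
    then show "\<And>w. w \<in> U \<Longrightarrow> Fn 1 w = 0" using c by simp
  qed
  have contA: "\<And>i. i \<in> {1..r} \<Longrightarrow> continuous_on U (A i)"
    using hol holomorphic_on_imp_continuous_on by blast
  have nz: "\<And>i. i \<in> {2..r} \<Longrightarrow> A i p \<noteq> 0"
  proof -
    fix i assume i: "i \<in> {2..r}"
    then have "A i p \<noteq> A 1 p" using assms(11) one by auto
    then show "A i p \<noteq> 0" using A1[OF pU] by simp
  qed
  have par: "\<And>i j. i \<in> {2..r} \<Longrightarrow> j \<in> {2..r} \<Longrightarrow> i \<noteq> j \<Longrightarrow> Im (A i p * cnj (A j p)) \<noteq> 0"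
  proof -
    fix i j assume i: "i \<in> {2..r}" and j: "j \<in> {2..r}" and ij: "i \<noteq> j"
    have "A i p - A 1 p \<notin> {of_real t * (A j p - A 1 p) | t. True}"
      using assms(10) i j ij one by auto
    then have "A i p \<notin> {of_real t * A j p | t. True}" using A1[OF pU] by simp
    then show "Im (A i p * cnj (A j p)) \<noteq> 0" using par_from nz[OF j] by blast
  qed
  interpret C: ctx4 U Fn A p r
    by (rule ctx4.intro[where U=U and F=Fn and A=A and p=p and r=r, OF opn conn pU assms(6) derF F0 F1 A1 contA par nz])
  have H: "Hfun U p (A i) w = Re (Fn i w)" if "i \<in> {1..r}" "w \<in> U" for i w
    using Hfun_eq[OF opn conn pU that(2) derF[OF that(1)]] F0[OF that(1)] by simp
  have WW: "W = C.Wc"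
  proof (rule set_eqI)
    fix z
    show "z \<in> W \<longleftrightarrow> z \<in> C.Wc"
    proof (cases "z \<in> U")
      case False then show ?thesis by (simp add: W_def C.Wc_def)
    next
      case True
      let ?S = "(\<lambda>i. Hfun U p (A i) z) ` {1..r}"
      have fin: "finite ?S" "?S \<noteq> {}" using one by auto
      have "0 \<in> ?S" using H[OF one True] F1[OF True] one by force
      then have ge: "Max ?S \<ge> 0" using fin by simp
      have "Max ?S = 0 \<longleftrightarrow> Max ?S \<le> 0" using ge by linarith
      also have "\<dots> \<longleftrightarrow> (\<forall>i\<in>{1..r}. Hfun U p (A i) z \<le> 0)" using fin by simp
      also have "\<dots> \<longleftrightarrow> (\<forall>i\<in>{1..r}. Re (Fn i z) \<le> 0)" using H True by simp
      finally show ?thesis using True by (simp add: W_def C.Wc_def)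
    qed
  qed
  obtain N where N: "C.concl N" using C.main by blast
  have goodV: "\<alpha> \<in> V z" if gd: "C.good z \<alpha>" and aU: "\<alpha> \<in> U" for z \<alpha>
  proof -
    obtain g where gall: "valid_path g \<and> path_image g \<subseteq> U \<and> pathstart g = z \<and> pathfinish g = \<alpha> \<and>
      (\<forall>i\<in>{1..r}. \<forall>s t. 0 \<le> s \<and> s \<le> t \<and> t \<le> 1 \<longrightarrow> Re (Fn i (g t)) \<le> Re (Fn i (g s)))"
      using gd unfolding C.good_def by blast
    have g1: "valid_path g" using gall by meson
    have g2: "path_image g \<subseteq> U" using gall by meson
    have g3: "pathstart g = z" using gall by meson
    have g4: "pathfinish g = \<alpha>" using gall by meson
    have g5: "\<forall>i\<in>{1..r}. \<forall>s t. 0 \<le> s \<and> s \<le> t \<and> t \<le> 1 \<longrightarrow> Re (Fn i (g t)) \<le> Re (Fn i (g s))"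
      using gall by meson
    note g = g1 g2 g3 g4 g5
    have hm: "\<forall>i\<in>{1..r}. \<forall>s t. 0 \<le> s \<and> s \<le> t \<and> t \<le> 1 \<longrightarrow> Hfun U p (A i) (g t) \<le> Hfun U p (A i) (g s)"
    proof (intro ballI allI impI)
      fix i :: nat and s t :: real assume i: "i \<in> {1..r}" and st: "0 \<le> s \<and> s \<le> t \<and> t \<le> 1"
      have "g t \<in> U" "g s \<in> U" using g(2) st by (auto simp: path_image_def)
      have "Re (Fn i (g t)) \<le> Re (Fn i (g s))" using g(5) i st by blast
      then show "Hfun U p (A i) (g t) \<le> Hfun U p (A i) (g s)"
        by (simp only: H[OF i \<open>g t \<in> U\<close>] H[OF i \<open>g s \<in> U\<close>])
    qed
    show ?thesis unfolding V_def Vset_def mem_Collect_eq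
      by (intro conjI exI[of _ g]) (rule aU, rule g(1), rule g(2), rule g(3), rule g(4), rule hm)
  qed
  show ?thesis
  proof (intro exI[of _ N] conjI ballI allI impI)
    have Nc: "open N \<and> p \<in> N \<and> (\<forall>\<alpha> \<in> N \<inter> interior C.Wc. \<forall>z::nat\<Rightarrow>complex.
      (\<forall>n. z n \<in> U) \<and> z \<longlonglongrightarrow> p \<longrightarrow> (\<forall>\<^sub>F n in sequentially. C.good (z n) \<alpha>))"
      using N unfolding C.concl_def .
    show "open N" "p \<in> N" using Nc by (rule conjunct1, meson Nc conjunct1 conjunct2)
    fix \<alpha> zz assume \<alpha>: "\<alpha> \<in> N \<inter> interior W" and zz: "(\<forall>n. zz n \<in> U) \<and> zz \<longlonglongrightarrow> p"
    have \<alpha>': "\<alpha> \<in> N \<inter> interior C.Wc" using \<alpha> WW by simp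
    have \<alpha>U: "\<alpha> \<in> U" using \<alpha>' interior_subset C.Wc_U by blast
    have NN: "\<forall>\<alpha> \<in> N \<inter> interior C.Wc. \<forall>z::nat\<Rightarrow>complex.
      (\<forall>n. z n \<in> U) \<and> z \<longlonglongrightarrow> p \<longrightarrow> (\<forall>\<^sub>F n in sequentially. C.good (z n) \<alpha>)"
      using Nc by (meson conjunct2)
    have "\<forall>\<^sub>F n in sequentially. C.good (zz n) \<alpha>" using NN \<alpha>' zz by simp
    then show "\<forall>\<^sub>F n in sequentially. \<alpha> \<in> V (zz n)"
    proof (rule eventually_mono)
      fix n assume "C.good (zz n) \<alpha>"
      then show "\<alpha> \<in> V (zz n)" using goodV \<alpha>U by simp
    qed
  qed
qed

end
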